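(* Consider the disclosure model described in the context. Any full-disclosure policy $d$ is Pareto efficient and satisfies $\Pi(d)\ge\Pi(d')$ for every $d'\in\mathcal{D}$.
   Context: Emissions lie in $E=[0,\bar e]$ with $\bar e>0$. The firm's type $\theta\in\Theta=[\underline\theta,\bar\theta]$ is private information with a continuous density $f=F'$ on $\Theta$. The firm's profit is $\tilde\pi(\theta,e,\tilde e)$ with actual emission $e$ and market-perceived emission $\tilde e$; it is strictly increasing in $e$ and strictly decreasing in $\tilde e$. Standing assumptions: $\tilde\pi$ is continuous on $\Theta\times E\times E$ and $C^2$ on its interior; $\pi(\theta,e):=\tilde\pi(\theta,e,e)$ is strictly concave in $e$; and $\pi(\theta,0)<\pi(\theta,\bar e)$ for all $\theta$. A disclosure policy is a function $d:E\to E$ (a partition of $E$ into level sets). An emission $e$ is belief-compatible under $d$ if $e\ge e'$ whenever $d(e')=d(e)$; $\tilde E_d$ is the set of such levels. The type-$\theta$ firm chooses $e\in\tilde E_d$ maximizing $\pi(\theta,e)$. $\mathcal{D}$ is the set of policies for which the maximum is attained for every type. For $d\in\mathcal{D}$, $\pi_d(\theta)=\max_{e\in\tilde E_d}\pi(\theta,e)$, and $\gamma_d(\theta)$ is the lowest maximizer. Further, $\Pi(d)=\int_\Theta\pi_d\,dF$ and $\Gamma(d)=\int_\Theta\gamma_d\,dF$. A policy $d\in\mathcal{D}$ is Pareto efficient if there is no $d'\in\mathcal{D}$ with $\Pi(d')\ge\Pi(d)$ and $\Gamma(d')\le\Gamma(d)$, at least one inequality strict. Let $\hat{\mathbf e}(\theta):=\arg\max_{e\in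 E}\pi(\theta,e)$. A full-disclosure policy is a policy $d$ such that, for every $e\in\hat{\mathbf e}(\Theta)$, $e$ is alone in its cell: $d(e')=d(e)$ implies $e'=e$. Such a policy belongs to $\mathcal{D}$. *)

theory Defs
  imports "HOL-Analysis.Analysis"
begin

definition strictly_concave_on :: "real set \<Rightarrow> (real \<Rightarrow> real) \<Rightarrow> bool" where
  "strictly_concave_on S g \<longleftrightarrow> convex S \<and>
     (\<forall>x\<in>S. \<forall>y\<in>S. \<forall>t. x \<noteq> y \<and> 0 < t \<and> t < 1 \<longrightarrow>
        g ((1 - t) * x + t * y) > (1 - t) * g x + t * g y)"

definition C2_on :: "('a::real_normed_vector \<Rightarrow> real) \<Rightarrow> 'a set \<Rightarrow> bool" where
  "C2_on g S \<longleftrightarrow> (\<exists>(D :: 'a \<Rightarrow> 'a \<Rightarrow>\<^sub>L real) (D2 :: 'a \<Rightarrow> 'a \<Rightarrow>\<^sub>L ('a \<Rightarrow>\<^sub>L real)).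
      (\<forall>x\<in>S. (g has_derivative blinfun_apply (D x)) (at x)) \<and>
      (\<forall>x\<in>S. (D has_derivative blinfun_apply (D2 x)) (at x)) \<and>
      continuous_on S D2)"

(* Standing assumptions of the model.  pt = tilde-pi (type, actual emission, perceived emission),
   E = [0, eb], Theta = [tlo, thi], f = density of F on Theta. *)
definition model_assms ::
  "(real \<Rightarrow> real \<Rightarrow> real \<Rightarrow> real) \<Rightarrow> real \<Rightarrow> real \<Rightarrow> real \<Rightarrow> (real \<Rightarrow> real) \<Rightarrow> bool" where
  "model_assms pt eb tlo thi f \<longleftrightarrow>
     0 < eb \<and> tlo < thi \<and>
     (\<forall>\<theta>\<in>{tlo..thi}. 0 \<le> f \<theta>) \<and> continuous_on {tlo..thi} f \<and> (f has_integral 1) {tlo..thi} \<and>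
     continuous_on ({tlo..thi} \<times> {0..eb} \<times> {0..eb}) (\<lambda>(\<theta>, e, et). pt \<theta> e et) \<and>
     C2_on (\<lambda>(\<theta>, e, et). pt \<theta> e et) (interior ({tlo..thi} \<times> {0..eb} \<times> {0..eb})) \<and>
     (\<forall>\<theta>\<in>{tlo..thi}. \<forall>et\<in>{0..eb}. \<forall>e1\<in>{0..eb}. \<forall>e2\<in>{0..eb}.
        e1 < e2 \<longrightarrow> pt \<theta> e1 et < pt \<theta> e2 et) \<and>
     (\<forall>\<theta>\<in>{tlo..thi}. \<forall>e\<in>{0..eb}. \<forall>e1\<in>{0..eb}. \<forall>e2\<in>{0..eb}.
        e1 < e2 \<longrightarrow> pt \<theta> e e2 < pt \<theta> e e1) \<and>
     (\<forall>\<theta>\<in>{tlo..thi}. strictly_concave_on {0..eb} (\<lambda>e. pt \<theta> e e)) \<and>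
     (\<forall>\<theta>\<in>{tlo..thi}. pt \<theta> 0 0 < pt \<theta> eb eb)"

definition red_profit :: "(real \<Rightarrow> real \<Rightarrow> real \<Rightarrow> real) \<Rightarrow> real \<Rightarrow> real \<Rightarrow> real" where
  "red_profit pt \<theta> e = pt \<theta> e e"

definition belief_compatible :: "real \<Rightarrow> (real \<Rightarrow> real) \<Rightarrow> real set" where
  "belief_compatible eb d = {e \<in> {0..eb}. \<forall>e'\<in>{0..eb}. d e' = d e \<longrightarrow> e' \<le> e}"

definition policies ::
  "(real \<Rightarrow> real \<Rightarrow> real \<Rightarrow> real) \<Rightarrow> real \<Rightarrow> real \<Rightarrow> real \<Rightarrow> (real \<Rightarrow> real) set" where
  "policies pt eb tlo thi = {d. (\<forall>e\<in>{0..eb}. d e \<in> {0..eb}) \<and>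
      (\<forall>\<theta>\<in>{tlo..thi}. \<exists>e\<in>belief_compatible eb d.
          \<forall>e'\<in>belief_compatible eb d. red_profit pt \<theta> e' \<le> red_profit pt \<theta> e)}"

definition pi_d :: "(real \<Rightarrow> real \<Rightarrow> real \<Rightarrow> real) \<Rightarrow> real \<Rightarrow> (real \<Rightarrow> real) \<Rightarrow> real \<Rightarrow> real" where
  "pi_d pt eb d \<theta> = (SUP e\<in>belief_compatible eb d. red_profit pt \<theta> e)"

definition gamma_d :: "(real \<Rightarrow> real \<Rightarrow> real \<Rightarrow> real) \<Rightarrow> real \<Rightarrow> (real \<Rightarrow> real) \<Rightarrow> real \<Rightarrow> real" where
  "gamma_d pt eb d \<theta> = (LEAST e. e \<in> belief_compatible eb d \<and>
      (\<forall>e'\<in>belief_compatible eb d. red_profit pt \<theta> e' \<le> red_profit pt \<theta> e))"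

definition Pi_val ::
  "(real \<Rightarrow> real \<Rightarrow> real \<Rightarrow> real) \<Rightarrow> real \<Rightarrow> real \<Rightarrow> real \<Rightarrow> (real \<Rightarrow> real) \<Rightarrow> (real \<Rightarrow> real) \<Rightarrow> real" where
  "Pi_val pt eb tlo thi f d = integral {tlo..thi} (\<lambda>\<theta>. pi_d pt eb d \<theta> * f \<theta>)"

definition Gamma_val ::
  "(real \<Rightarrow> real \<Rightarrow> real \<Rightarrow> real) \<Rightarrow> real \<Rightarrow> real \<Rightarrow> real \<Rightarrow> (real \<Rightarrow> real) \<Rightarrow> (real \<Rightarrow> real) \<Rightarrow> real" where
  "Gamma_val pt eb tlo thi f d = integral {tlo..thi} (\<lambda>\<theta>. gamma_d pt eb d \<theta> * f \<theta>)"

definition pareto_efficient ::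
  "(real \<Rightarrow> real \<Rightarrow> real \<Rightarrow> real) \<Rightarrow> real \<Rightarrow> real \<Rightarrow> real \<Rightarrow> (real \<Rightarrow> real) \<Rightarrow> (real \<Rightarrow> real) \<Rightarrow> bool" where
  "pareto_efficient pt eb tlo thi f d \<longleftrightarrow> d \<in> policies pt eb tlo thi \<and>
     \<not> (\<exists>d'\<in>policies pt eb tlo thi.
          Pi_val pt eb tlo thi f d' \<ge> Pi_val pt eb tlo thi f d \<and>
          Gamma_val pt eb tlo thi f d' \<le> Gamma_val pt eb tlo thi f d \<and>
          (Pi_val pt eb tlo thi f d' > Pi_val pt eb tlo thi f d \<or>
           Gamma_val pt eb tlo thi f d' < Gamma_val pt eb tlo thi f d))"

definition argmax_E :: "(real \<Rightarrow> real \<Rightarrow> real \<Rightarrow> real) \<Rightarrow> real \<Rightarrow> real \<Rightarrow> real set" where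
  "argmax_E pt eb \<theta> = {e \<in> {0..eb}. \<forall>e'\<in>{0..eb}. red_profit pt \<theta> e' \<le> red_profit pt \<theta> e}"

definition full_disclosure ::
  "(real \<Rightarrow> real \<Rightarrow> real \<Rightarrow> real) \<Rightarrow> real \<Rightarrow> real \<Rightarrow> real \<Rightarrow> (real \<Rightarrow> real) \<Rightarrow> bool" where
  "full_disclosure pt eb tlo thi d \<longleftrightarrow> (\<forall>e\<in>{0..eb}. d e \<in> {0..eb}) \<and>
     (\<forall>\<theta>\<in>{tlo..thi}. \<forall>e\<in>argmax_E pt eb \<theta>. \<forall>e'\<in>{0..eb}. d e' = d e \<longrightarrow> e' = e)"

end

theory Submission
  imports Defs
begin

lemma cont_h:
  assumes "model_assms pt eb tlo thi f"
  shows "continuous_on ({tlo..thi} \<times> {0..eb}) (\<lambda>(x, e). red_profit pt x e)"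
proof -
  have c: "continuous_on ({tlo..thi} \<times> {0..eb} \<times> {0..eb}) (\<lambda>(\<theta>, e, et). pt \<theta> e et)"
    using assms unfolding model_assms_def by blast
  have "continuous_on ({tlo..thi} \<times> {0..eb}) (\<lambda>p. (\<lambda>(\<theta>, e, et). pt \<theta> e et) ((\<lambda>(x,e). (x,e,e)) p))"
    apply (rule continuous_on_compose2[OF c])
    apply (simp add: case_prod_beta' continuous_on_Pair continuous_on_fst continuous_on_snd continuous_on_id)
    apply auto
    done
  then show ?thesis by (simp add: red_profit_def case_prod_beta')
qed

lemma uc_h:
  assumes "model_assms pt eb tlo thi f"
  shows "uniformly_continuous_on ({tlo..thi} \<times> {0..eb}) (\<lambda>(x, e). red_profit pt x e)"
  by (rule compact_uniformly_continuous[OF cont_h[OF assms]]) (simp add: compact_Times)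

lemma L_cont:
  fixes g :: "real \<Rightarrow> real \<Rightarrow> real"
  assumes uc: "uniformly_continuous_on (S \<times> E) (\<lambda>(x, e). g x e)"
    and BE: "B \<subseteq> E"
    and mx: "\<forall>x\<in>S. \<exists>e\<in>B. \<forall>e'\<in>B. g x e' \<le> g x e"
  shows "continuous_on S (\<lambda>x. SUP e\<in>B. g x e)"
  unfolding continuous_on_iff
proof (intro ballI allI impI)
  fix x and \<epsilon> :: real assume x: "x \<in> S" and "0 < \<epsilon>"
  then obtain \<delta> where dp: "\<delta> > 0" and d: "\<forall>p\<in>S \<times> E. \<forall>q\<in>S \<times> E. dist q p < \<delta> \<longrightarrow>
      dist ((\<lambda>(x, e). g x e) q) ((\<lambda>(x, e). g x e) p) < \<epsilon>"
    using uc unfolding uniformly_continuous_on_def by metis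
  have sup: "(SUP e\<in>B. g y e) = g y e0" if "e0 \<in> B" "\<forall>e'\<in>B. g y e' \<le> g y e0" for y e0
    using that by (intro cSup_eq_maximum) auto
  show "\<exists>\<delta>>0. \<forall>x'\<in>S. dist x' x < \<delta> \<longrightarrow> dist (SUP e\<in>B. g x' e) (SUP e\<in>B. g x e) < \<epsilon>"
  proof (intro exI[of _ \<delta>] conjI ballI impI dp)
    fix x' assume x': "x' \<in> S" and dx: "dist x' x < \<delta>"
    obtain e1 where e1: "e1 \<in> B" "\<forall>e'\<in>B. g x e' \<le> g x e1" using mx x by blast
    obtain e2 where e2: "e2 \<in> B" "\<forall>e'\<in>B. g x' e' \<le> g x' e2" using mx x' by blast
    have cl: "\<bar>g x' e - g x e\<bar> < \<epsilon>" if "e \<in> B" for e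
    proof -
      have "dist (x', e) (x, e) < \<delta>" using dx by (simp add: dist_Pair_Pair)
      then show ?thesis using d x x' that BE by (auto simp: dist_real_def)
    qed
    have "g x' e2 \<ge> g x' e1" "g x e1 \<ge> g x e2" using e1 e2 by auto
    then have "\<bar>g x' e2 - g x e1\<bar> < \<epsilon>" using cl[OF e1(1)] cl[OF e2(1)] by linarith
    then show "dist (SUP e\<in>B. g x' e) (SUP e\<in>B. g x e) < \<epsilon>"
      using sup[OF e1] sup[OF e2] by (simp add: dist_real_def)
  qed
qed

lemma uniq:
  assumes sc: "strictly_concave_on {0..eb} g"
    and e1: "e1 \<in> {0..eb}" "\<forall>e'\<in>{0..eb}. g e' \<le> g e1"
    and e2: "e2 \<in> {0..eb}" "\<forall>e'\<in>{0..eb}. g e' \<le> g e2"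
  shows "e1 = e2"
proof (rule ccontr)
  assume ne: "e1 \<noteq> e2"
  have "g ((1 - 1/2) * e1 + (1/2) * e2) > (1 - 1/2) * g e1 + (1/2) * g e2"
  proof -
    have "\<forall>x\<in>{0..eb}. \<forall>y\<in>{0..eb}. \<forall>t. x \<noteq> y \<and> 0 < t \<and> t < 1 \<longrightarrow>
        g ((1 - t) * x + t * y) > (1 - t) * g x + t * g y" using sc unfolding strictly_concave_on_def by blast
    from this[rule_format, of e1 e2 "1/2"] show ?thesis using ne e1(1) e2(1) by simp
  qed
  moreover have "(1 - 1/2) * e1 + (1/2) * e2 \<in> {0..eb}" using e1 e2 by auto
  ultimately have "g ((1 - 1/2) * e1 + (1/2) * e2) \<le> g e1" "g ((1 - 1/2) * e1 + (1/2) * e2) \<le> g e2"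
    "(1 - 1/2) * g e1 + (1/2) * g e2 < g ((1 - 1/2) * e1 + (1/2) * e2)"
    using e1(2) e2(2) by blast+
  then show False by simp
qed

theorem proposition3:
  fixes pt :: "real \<Rightarrow> real \<Rightarrow> real \<Rightarrow> real" and eb tlo thi :: real
    and f d :: "real \<Rightarrow> real"
  assumes "model_assms pt eb tlo thi f"
    and "full_disclosure pt eb tlo thi d"
  shows "pareto_efficient pt eb tlo thi f d \<and>
         (\<forall>d'\<in>policies pt eb tlo thi. Pi_val pt eb tlo thi f d \<ge> Pi_val pt eb tlo thi f d')"
proof -
  note ma = assms(1)
  have lt: "tlo < thi" using ma unfolding model_assms_def by (elim conjE)
  have fpos: "\<forall>\<theta>\<in>{tlo..thi}. 0 \<le> f \<theta>" using ma unfolding model_assms_def by (elim conjE)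
  have fc: "continuous_on {tlo..thi} f" using ma unfolding model_assms_def by (elim conjE)
  have sc: "\<forall>\<theta>\<in>{tlo..thi}. strictly_concave_on {0..eb} (\<lambda>e. pt \<theta> e e)"
    using ma unfolding model_assms_def by (elim conjE)
  have ebp: "0 < eb" using ma unfolding model_assms_def by (elim conjE)
  have dE: "\<forall>e\<in>{0..eb}. d e \<in> {0..eb}"
    and fd: "\<forall>\<theta>\<in>{tlo..thi}. \<forall>e\<in>argmax_E pt eb \<theta>. \<forall>e'\<in>{0..eb}. d e' = d e \<longrightarrow> e' = e"
    using assms(2) unfolding full_disclosure_def by auto
  have ex: "\<exists>e. e \<in> argmax_E pt eb \<theta>" if "\<theta> \<in> {tlo..thi}" for \<theta>
  proof -
    have "continuous_on {0..eb} (\<lambda>e. (\<lambda>(x, e). red_profit pt x e) (\<theta>, e))"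
      by (rule continuous_on_compose2[OF cont_h[OF ma]])
        (use that in \<open>auto intro!: continuous_intros\<close>)
    then have "continuous_on {0..eb} (\<lambda>e. red_profit pt \<theta> e)" by simp
    moreover have "{0..eb} \<noteq> {}" using ebp by simp
    ultimately obtain e where "e \<in> {0..eb}" "\<forall>y\<in>{0..eb}. red_profit pt \<theta> y \<le> red_profit pt \<theta> e"
      using continuous_attains_sup[of "{0..eb}"] by (meson compact_Icc)
    then show ?thesis unfolding argmax_E_def by blast
  qed
  define eh where "eh \<theta> = (SOME e. e \<in> argmax_E pt eb \<theta>)" for \<theta>
  have eh: "eh \<theta> \<in> argmax_E pt eb \<theta>" if "\<theta> \<in> {tlo..thi}" for \<theta>
    unfolding eh_def using ex[OF that] by (rule someI_ex)
  have uniqA: "e = eh \<theta>" if "\<theta> \<in> {tlo..thi}" "e \<in> argmax_E pt eb \<theta>" for e \<theta>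
    using uniq[OF sc[rule_format, OF that(1)], of e "eh \<theta>"] that eh[OF that(1)]
    unfolding argmax_E_def red_profit_def by auto
  define M where "M \<theta> = red_profit pt \<theta> (eh \<theta>)" for \<theta>
  have key: "pi_d pt eb d' \<theta> \<le> M \<theta> \<and> (\<forall>e\<in>belief_compatible eb d'. red_profit pt \<theta> e \<le> pi_d pt eb d' \<theta>)
     \<and> (pi_d pt eb d' \<theta> = M \<theta> \<longrightarrow> gamma_d pt eb d' \<theta> = eh \<theta>)"
    if d': "d' \<in> policies pt eb tlo thi" and th: "\<theta> \<in> {tlo..thi}" for d' \<theta>
  proof -
    let ?B = "belief_compatible eb d'"
    have BE: "?B \<subseteq> {0..eb}" unfolding belief_compatible_def by auto
    obtain e0 where e0: "e0 \<in> ?B" "\<forall>e'\<in>?B. red_profit pt \<theta> e' \<le> red_profit pt \<theta> e0"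
      using d' th unfolding policies_def by blast
    have pe: "pi_d pt eb d' \<theta> = red_profit pt \<theta> e0"
      unfolding pi_d_def using e0 by (intro cSup_eq_maximum) auto
    have a: "pi_d pt eb d' \<theta> \<le> M \<theta>"
      using pe eh[OF th] e0(1) BE unfolding M_def argmax_E_def by auto
    have c: "\<forall>e\<in>?B. red_profit pt \<theta> e \<le> pi_d pt eb d' \<theta>" using pe e0 by auto
    have b: "gamma_d pt eb d' \<theta> = eh \<theta>" if eq: "pi_d pt eb d' \<theta> = M \<theta>"
    proof -
      have P: "y = eh \<theta>" if "y \<in> ?B" "\<forall>e'\<in>?B. red_profit pt \<theta> e' \<le> red_profit pt \<theta> y" for y
      proof -
        have "red_profit pt \<theta> y = M \<theta>" using that e0 pe eq by force
        then have "y \<in> argmax_E pt eb \<theta>" using that(1) BE eh[OF th]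
          unfolding argmax_E_def M_def by auto
        then show ?thesis using uniqA th by blast
      qed
      have e0h: "e0 = eh \<theta>" using P e0 by blast
      show ?thesis unfolding gamma_d_def
      proof (rule Least_equality)
        show "eh \<theta> \<in> ?B \<and> (\<forall>e'\<in>?B. red_profit pt \<theta> e' \<le> red_profit pt \<theta> (eh \<theta>))"
          using e0 e0h by blast
      next
        fix y assume "y \<in> ?B \<and> (\<forall>e'\<in>?B. red_profit pt \<theta> e' \<le> red_profit pt \<theta> y)"
        then have "y = eh \<theta>" using P by blast
        then show "eh \<theta> \<le> y" by simp
      qed
    qed
    show ?thesis using a b c by blast
  qed
  have bc: "eh \<theta> \<in> belief_compatible eb d" if th: "\<theta> \<in> {tlo..thi}" for \<theta>
  proof -
    have a: "eh \<theta> \<in> argmax_E pt eb \<theta>" by (rule eh[OF th])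
    then have "eh \<theta> \<in> {0..eb}" unfolding argmax_E_def by blast
    moreover have "\<forall>e'\<in>{0..eb}. d e' = d (eh \<theta>) \<longrightarrow> e' \<le> eh \<theta>"
    proof (intro ballI impI)
      fix e' assume "e' \<in> {0..eb}" "d e' = d (eh \<theta>)"
      then have "e' = eh \<theta>" using fd th a by blast
      then show "e' \<le> eh \<theta>" by simp
    qed
    ultimately show ?thesis unfolding belief_compatible_def by blast
  qed
  have dpol: "d \<in> policies pt eb tlo thi"
  proof -
    have "\<forall>e'\<in>belief_compatible eb d. red_profit pt \<theta> e' \<le> red_profit pt \<theta> (eh \<theta>)"
      if "\<theta> \<in> {tlo..thi}" for \<theta>
    proof
      fix e' assume "e' \<in> belief_compatible eb d"
      then have "e' \<in> {0..eb}" unfolding belief_compatible_def by blast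
      then show "red_profit pt \<theta> e' \<le> red_profit pt \<theta> (eh \<theta>)"
        using eh[OF that] unfolding argmax_E_def by blast
    qed
    then show ?thesis unfolding policies_def using dE bc by blast
  qed
  have piD: "pi_d pt eb d \<theta> = M \<theta>" if th: "\<theta> \<in> {tlo..thi}" for \<theta>
  proof -
    have k: "pi_d pt eb d \<theta> \<le> M \<theta>" "\<forall>e\<in>belief_compatible eb d. red_profit pt \<theta> e \<le> pi_d pt eb d \<theta>"
      using key[OF dpol th] by blast+
    have "M \<theta> \<le> pi_d pt eb d \<theta>" unfolding M_def using k(2) bc[OF th] by blast
    then show ?thesis using k(1) by linarith
  qed
  have gD: "gamma_d pt eb d \<theta> = eh \<theta>" if "\<theta> \<in> {tlo..thi}" for \<theta>
    using key[OF dpol that] piD[OF that] by blast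
  have cont: "continuous_on {tlo..thi} (\<lambda>\<theta>. pi_d pt eb d' \<theta>)" if d': "d' \<in> policies pt eb tlo thi" for d'
  proof -
    have "continuous_on {tlo..thi} (\<lambda>x. SUP e\<in>belief_compatible eb d'. red_profit pt x e)"
      by (rule L_cont[OF uc_h[OF ma]])
        (use d' in \<open>auto simp: belief_compatible_def policies_def\<close>)
    then show ?thesis unfolding pi_d_def .
  qed
  have contf: "continuous_on {tlo..thi} (\<lambda>\<theta>. pi_d pt eb d' \<theta> * f \<theta>)" if d': "d' \<in> policies pt eb tlo thi" for d'
    by (intro continuous_on_mult cont[OF d'] fc)
  have intg: "(\<lambda>\<theta>. pi_d pt eb d' \<theta> * f \<theta>) integrable_on {tlo..thi}" if d': "d' \<in> policies pt eb tlo thi" for d'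
    by (rule integrable_continuous_interval[OF contf[OF d']])
  have ptw: "pi_d pt eb d' \<theta> * f \<theta> \<le> pi_d pt eb d \<theta> * f \<theta>"
    if d': "d' \<in> policies pt eb tlo thi" and th: "\<theta> \<in> {tlo..thi}" for d' \<theta>
    using key[OF d' th] piD[OF th] fpos th by (intro mult_right_mono) auto
  have opt: "Pi_val pt eb tlo thi f d \<ge> Pi_val pt eb tlo thi f d'" if d': "d' \<in> policies pt eb tlo thi" for d'
    unfolding Pi_val_def by (rule integral_le[OF intg[OF d'] intg[OF dpol] ptw[OF d']])
  have noimp: False if d': "d' \<in> policies pt eb tlo thi"
    and ge: "Pi_val pt eb tlo thi f d' \<ge> Pi_val pt eb tlo thi f d"
    and le: "Gamma_val pt eb tlo thi f d' \<le> Gamma_val pt eb tlo thi f d"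
    and st: "Pi_val pt eb tlo thi f d' > Pi_val pt eb tlo thi f d \<or>
           Gamma_val pt eb tlo thi f d' < Gamma_val pt eb tlo thi f d" for d'
  proof -
    have eqP: "Pi_val pt eb tlo thi f d' = Pi_val pt eb tlo thi f d" using opt[OF d'] ge by linarith
    let ?k = "\<lambda>\<theta>. pi_d pt eb d \<theta> * f \<theta> - pi_d pt eb d' \<theta> * f \<theta>"
    have h1: "(?k has_integral (integral {tlo..thi} (\<lambda>\<theta>. pi_d pt eb d \<theta> * f \<theta>)
        - integral {tlo..thi} (\<lambda>\<theta>. pi_d pt eb d' \<theta> * f \<theta>))) {tlo..thi}"
      by (rule has_integral_diff[OF integrable_integral[OF intg[OF dpol]] integrable_integral[OF intg[OF d']]])
    have z: "integral {tlo..thi} (\<lambda>\<theta>. pi_d pt eb d \<theta> * f \<theta>)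
        - integral {tlo..thi} (\<lambda>\<theta>. pi_d pt eb d' \<theta> * f \<theta>) = 0"
      using eqP unfolding Pi_val_def by linarith
    have hi: "(?k has_integral 0) (cbox tlo thi)"
      using h1 unfolding z cbox_interval .
    have kc: "continuous_on (cbox tlo thi) ?k"
      unfolding cbox_interval by (rule continuous_on_diff[OF contf[OF dpol] contf[OF d']])
    have k0: "?k \<theta> = 0" if th: "\<theta> \<in> {tlo..thi}" for \<theta>
    proof (rule has_integral_0_cbox_imp_0[OF kc _ hi])
      fix x assume "x \<in> box tlo thi"
      then have "x \<in> {tlo..thi}" unfolding box_real by auto
      then show "0 \<le> ?k x" using ptw[OF d'] by (simp only: diff_ge_0_iff_ge)
    next
      show "box tlo thi \<noteq> {}" using lt unfolding box_real by simp
    next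
      show "\<theta> \<in> cbox tlo thi" using th unfolding cbox_interval .
    qed
    have "gamma_d pt eb d' \<theta> * f \<theta> = gamma_d pt eb d \<theta> * f \<theta>" if th: "\<theta> \<in> {tlo..thi}" for \<theta>
    proof (cases "f \<theta> = 0")
      case False
      have "(pi_d pt eb d \<theta> - pi_d pt eb d' \<theta>) * f \<theta> = 0"
        using k0[OF th] by (simp only: left_diff_distrib)
      then have "pi_d pt eb d \<theta> = pi_d pt eb d' \<theta>" using False by simp
      then have "pi_d pt eb d' \<theta> = M \<theta>" using piD[OF th] by simp
      then have "gamma_d pt eb d' \<theta> = eh \<theta>" using key[OF d' th] by blast
      then show ?thesis using gD[OF th] by simp
    next
      case True
      then show ?thesis by simp
    qed
    then have "Gamma_val pt eb tlo thi f d' = Gamma_val pt eb tlo thi f d"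
      unfolding Gamma_val_def by (rule integral_cong)
    then show False using st eqP by linarith
  qed
  show ?thesis
    unfolding pareto_efficient_def using dpol opt noimp by blast
qed

end
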